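(* Let $(X,G)$ and $(Y,H)$ be free odometers with $G=H=\mathbb Z^d$. Let $\varphi:Y\to X$ be a homeomorphism implementing a continuous orbit equivalence between $(Y,H)$ and $(X,G)$, and let $f:H\times Y\to G$ be the corresponding orbit cocycle. Then there exist finite-index subgroups $G_0\subseteq G$ and $H_0\subseteq H$ with $[G:G_0]=[H:H_0]$, a clopen partition $\{C_0,\dots,C_{q-1}\}$ of $Y$ into $H_0$-invariant sets, and group isomorphisms $\theta_i:H_0\to G_0$, $i=0,\dots,q-1$, such that $f(h,y)=\theta_i(h)$ for every $h\in H_0$, $y\in C_i$ and $i=0,\dots,q-1$.
   Context: $G$-odometer: for a decreasing sequence $G_0\supseteq G_1\supseteq\cdots$ of finite-index subgroups of $G$, the inverse limit $\varprojlim(G/G_n,\pi_n)$ of coset spaces under the natural maps $\pi_n:G/G_n\to G/G_{n-1}$, with $G$ acting by translation coordinatewise. Free: $g\cdot x=x$ implies $g=e$. Continuous orbit equivalence: a homeomorphism $\varphi:Y\to X$ mapping $H$-orbits bijectively onto $G$-orbits, such that locally each group element of one group is conjugated by $\varphi$ to an element of the other on a clopen neighborhood (in both directions). Orbit cocycle: the map $f:H\times Y\to G$ defined by $f(h,y)\cdot\varphi(y)=\varphi(h\cdot y)$ (well defined by freeness). *)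

theory Defs
  imports "HOL-Analysis.Analysis"
begin

text \<open>The group G = H = Z^d is modelled as the additive group int ^ 'd,
  with 'd a finite type of cardinality d.\<close>

definition subgroup_add :: "'a::ab_group_add set \<Rightarrow> bool" where
  "subgroup_add S \<longleftrightarrow> 0 \<in> S \<and> (\<forall>a\<in>S. \<forall>b\<in>S. a + b \<in> S) \<and> (\<forall>a\<in>S. - a \<in> S)"

definition cosets_of :: "'a::ab_group_add set \<Rightarrow> 'a set set" where
  "cosets_of S = {(+) a ` S | a. True}"

definition finite_index :: "'a::ab_group_add set \<Rightarrow> bool" where
  "finite_index S \<longleftrightarrow> subgroup_add S \<and> finite (cosets_of S)"

definition index :: "'a::ab_group_add set \<Rightarrow> nat" where
  "index S = card (cosets_of S)"

definition odometer_seq :: "(nat \<Rightarrow> 'a::ab_group_add set) \<Rightarrow> bool" where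
  "odometer_seq Gs \<longleftrightarrow> (\<forall>n. finite_index (Gs n)) \<and> (\<forall>n. Gs (Suc n) \<subseteq> Gs n)"

text \<open>The inverse limit of the coset spaces G/G_n under the natural maps:
  compatible sequences of cosets (x (n+1) is contained in x n).\<close>
definition odometer_space :: "(nat \<Rightarrow> 'a::ab_group_add set) \<Rightarrow> (nat \<Rightarrow> 'a set) set" where
  "odometer_space Gs = {x. (\<forall>n. x n \<in> cosets_of (Gs n)) \<and> (\<forall>n. x (Suc n) \<subseteq> x n)}"

definition odometer_top :: "(nat \<Rightarrow> 'a::ab_group_add set) \<Rightarrow> (nat \<Rightarrow> 'a set) topology" where
  "odometer_top Gs = subtopology
      (product_topology (\<lambda>n. discrete_topology (cosets_of (Gs n))) UNIV) (odometer_space Gs)"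

definition odo_act :: "'a::ab_group_add \<Rightarrow> (nat \<Rightarrow> 'a set) \<Rightarrow> (nat \<Rightarrow> 'a set)" where
  "odo_act g x = (\<lambda>n. (+) g ` x n)"

definition free_odometer :: "(nat \<Rightarrow> 'a::ab_group_add set) \<Rightarrow> bool" where
  "free_odometer Gs \<longleftrightarrow> odometer_seq Gs \<and>
     (\<forall>g. \<forall>x\<in>odometer_space Gs. odo_act g x = x \<longrightarrow> g = 0)"

definition clopenin :: "'a topology \<Rightarrow> 'a set \<Rightarrow> bool" where
  "clopenin T U \<longleftrightarrow> openin T U \<and> closedin T U"

definition cont_orbit_equiv ::
  "(nat \<Rightarrow> 'b::ab_group_add set) \<Rightarrow> (nat \<Rightarrow> 'a::ab_group_add set)
     \<Rightarrow> ((nat \<Rightarrow> 'b set) \<Rightarrow> (nat \<Rightarrow> 'a set)) \<Rightarrow> bool" where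
  "cont_orbit_equiv Hs Gs \<phi> \<longleftrightarrow>
     homeomorphic_map (odometer_top Hs) (odometer_top Gs) \<phi> \<and>
     (\<forall>y\<in>odometer_space Hs. \<phi> ` {odo_act h y | h. True} = {odo_act g (\<phi> y) | g. True}) \<and>
     (\<forall>h. \<forall>y\<in>odometer_space Hs. \<exists>U g. clopenin (odometer_top Hs) U \<and> y \<in> U \<and>
         (\<forall>y'\<in>U. \<phi> (odo_act h y') = odo_act g (\<phi> y'))) \<and>
     (\<forall>g. \<forall>x\<in>odometer_space Gs. \<exists>V h. clopenin (odometer_top Gs) V \<and> x \<in> V \<and>
         (\<forall>x'\<in>V. inv_into (odometer_space Hs) \<phi> (odo_act g x')
                    = odo_act h (inv_into (odometer_space Hs) \<phi> x')))"

end

theory Submission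
  imports Defs
begin

lemma act_act: "odo_act a (odo_act b x) = odo_act (a + b) x"
  by (auto simp: odo_act_def image_image add.assoc)

lemma act_0: "odo_act 0 x = x"
  by (simp add: odo_act_def)

lemma transl: "(+) g ` ((+) c ` S) = (+) (g + c) ` (S::'a::ab_group_add set)"
  by (simp add: image_image add.assoc)

lemma act_space:
  assumes "x \<in> odometer_space Gs" shows "odo_act g x \<in> odometer_space Gs"
proof -
  have "odo_act g x n \<in> cosets_of (Gs n)" for n
  proof -
    from assms obtain a where "x n = (+) a ` Gs n" unfolding odometer_space_def cosets_of_def by blast
    then show ?thesis unfolding odo_act_def cosets_of_def by (auto simp: transl)
  qed
  moreover have "odo_act g x (Suc n) \<subseteq> odo_act g x n" for n
    using assms unfolding odometer_space_def odo_act_def by auto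
  ultimately show ?thesis unfolding odometer_space_def by auto
qed

lemma free_cancel:
  assumes "free_odometer Gs" "x \<in> odometer_space Gs" "odo_act g x = odo_act g' x"
  shows "g = g'"
proof -
  have "odo_act (- g') (odo_act g x) = odo_act (- g') (odo_act g' x)" using assms(3) by simp
  hence "odo_act (g - g') x = x" by (simp add: act_act act_0)
  hence "g - g' = 0" using assms(1,2) unfolding free_odometer_def by blast
  thus ?thesis by simp
qed

lemma coset_inter:
  assumes "subgroup_add S" "t \<in> (+) a ` S" "t \<in> (+) b ` S"
  shows "(+) a ` S = (+) b ` (S::'a::ab_group_add set)"
proof -
  from assms obtain s1 s2 where s: "s1 \<in> S" "s2 \<in> S" "t = a + s1" "t = b + s2" by auto
  have sub: "(+) a ` S \<subseteq> (+) b ` S" if "s1 \<in> S" "s2 \<in> S" "a + s1 = b + s2" for a b s1 s2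
  proof
    fix u assume "u \<in> (+) a ` S"
    then obtain s where s: "s \<in> S" "u = a + s" by auto
    have "s2 + - s1 + s \<in> S" using assms(1) that s unfolding subgroup_add_def by blast
    moreover have "u = b + (s2 + - s1 + s)" using that s
      by (metis (no_types, lifting) add.assoc add.commute add_diff_cancel_left' diff_add_cancel diff_conv_add_uminus)
    ultimately show "u \<in> (+) b ` S" by blast
  qed
  show ?thesis using sub[of s1 s2 a b] sub[of s2 s1 b a] s by auto
qed

lemma coset_nonempty: "subgroup_add S \<Longrightarrow> a \<in> (+) a ` S"
  unfolding subgroup_add_def by force

lemma space_mono:
  assumes "x \<in> odometer_space Gs" "i \<le> n" shows "x n \<subseteq> x i"
proof -
  have "\<And>k. x (Suc k) \<subseteq> x k" using assms(1) unfolding odometer_space_def by blast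
  thus ?thesis using lift_Suc_antimono_le[of x, OF _ assms(2)] by blast
qed

lemma coord_eq:
  assumes "odometer_seq Gs" "x \<in> odometer_space Gs" "x' \<in> odometer_space Gs"
    "x' n = x n" "i \<le> n"
  shows "x' i = x i"
proof -
  from assms(2) obtain a where a: "x n = (+) a ` Gs n"
    unfolding odometer_space_def cosets_of_def by blast
  have sn: "subgroup_add (Gs n)" "subgroup_add (Gs i)"
    using assms(1) unfolding odometer_seq_def finite_index_def by auto
  have t: "a \<in> x n" using a coset_nonempty[OF sn(1)] by simp
  from assms(2) obtain b where b: "x i = (+) b ` Gs i"
    unfolding odometer_space_def cosets_of_def by blast
  from assms(3) obtain c where c: "x' i = (+) c ` Gs i"
    unfolding odometer_space_def cosets_of_def by blast
  have "a \<in> x i" using t space_mono[OF assms(2,5)] by auto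
  moreover have "a \<in> x' i" using t assms(4) space_mono[OF assms(3,5)] by auto
  ultimately show ?thesis using coset_inter[OF sn(2)] b c by metis
qed

lemma subgroup_translate:
  assumes "subgroup_add S" "h \<in> S"
  shows "(+) h ` ((+) c ` S) = (+) c ` (S::'a::ab_group_add set)"
proof -
  have "(+) h ` S = S"
  proof
    show "(+) h ` S \<subseteq> S" using assms unfolding subgroup_add_def by auto
    show "S \<subseteq> (+) h ` S"
    proof
      fix s assume "s \<in> S"
      moreover have "- h \<in> S" using assms unfolding subgroup_add_def by blast
      ultimately have "- h + s \<in> S" using assms unfolding subgroup_add_def by blast
      thus "s \<in> (+) h ` S" by (force intro: image_eqI[where x="- h + s"])
    qed
  qed
  hence "(+) c ` ((+) h ` S) = (+) c ` S" by simp
  thus ?thesis by (simp add: image_image add.left_commute)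
qed

lemma topspace_odo: "topspace (odometer_top Gs) = odometer_space Gs"
proof -
  have "odometer_space Gs \<subseteq> (\<Pi>\<^sub>E n\<in>UNIV. cosets_of (Gs n))"
    unfolding odometer_space_def PiE_UNIV_domain by auto
  thus ?thesis unfolding odometer_top_def topspace_subtopology topspace_product_topology
    topspace_discrete_topology by blast
qed

lemma open_dep:
  fixes A :: "nat \<Rightarrow> 'b set"
  assumes "S \<subseteq> (\<Pi>\<^sub>E n\<in>UNIV. A n)"
    "\<forall>x\<in>S. \<exists>m. \<forall>x'\<in>(\<Pi>\<^sub>E n\<in>UNIV. A n). (\<forall>i\<le>m. x' i = x i) \<longrightarrow> x' \<in> S"
  shows "openin (product_topology (\<lambda>n. discrete_topology (A n)) UNIV) S"
  unfolding openin_product_topology_alt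
proof
  fix x assume x: "x \<in> S"
  then obtain m where m: "\<forall>x'\<in>(\<Pi>\<^sub>E n\<in>UNIV. A n). (\<forall>i\<le>m. x' i = x i) \<longrightarrow> x' \<in> S"
    using assms(2) by blast
  have xA: "x i \<in> A i" for i using x assms(1) by (auto simp: PiE_UNIV_domain)
  define U where "U = (\<lambda>i. if i \<le> m then {x i} else A i)"
  have "{i \<in> UNIV. U i \<noteq> topspace (discrete_topology (A i))} \<subseteq> {..m}"
    unfolding U_def by auto
  hence "finite {i \<in> UNIV. U i \<noteq> topspace (discrete_topology (A i))}"
    using finite_subset by blast
  moreover have "\<forall>i\<in>UNIV. openin (discrete_topology (A i)) (U i)"
    using xA unfolding U_def by auto
  moreover have "x \<in> Pi\<^sub>E UNIV U" unfolding U_def PiE_UNIV_domain using xA by auto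
  moreover have "Pi\<^sub>E UNIV U \<subseteq> S"
  proof
    fix x' assume "x' \<in> Pi\<^sub>E UNIV U"
    hence x': "\<And>i. x' i \<in> U i" unfolding PiE_UNIV_domain by auto
    have "x' i \<in> A i" for i
    proof (cases "i \<le> m")
      case True thus ?thesis using x'[of i] xA[of i] unfolding U_def by simp
    next
      case False thus ?thesis using x'[of i] unfolding U_def by simp
    qed
    hence "x' \<in> (\<Pi>\<^sub>E n\<in>UNIV. A n)" unfolding PiE_UNIV_domain by blast
    moreover have "\<forall>i\<le>m. x' i = x i"
    proof (intro allI impI)
      fix i assume "i \<le> m" thus "x' i = x i" using x'[of i] unfolding U_def by simp
    qed
    ultimately show "x' \<in> S" using m by blast
  qed
  ultimately show "\<exists>U. finite {i \<in> UNIV. U i \<noteq> topspace (discrete_topology (A i))} \<and>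
      (\<forall>i\<in>UNIV. openin (discrete_topology (A i)) (U i)) \<and> x \<in> Pi\<^sub>E UNIV U \<and> Pi\<^sub>E UNIV U \<subseteq> S"
    by blast
qed

lemma open_cyl:
  assumes "odometer_seq Gs" "openin (odometer_top Gs) U" "y \<in> U"
  shows "\<exists>n. \<forall>y'\<in>odometer_space Gs. y' n = y n \<longrightarrow> y' \<in> U"
proof -
  obtain T where T: "openin (product_topology (\<lambda>n. discrete_topology (cosets_of (Gs n))) UNIV) T"
    "U = T \<inter> odometer_space Gs"
    using assms(2) unfolding odometer_top_def openin_subtopology by blast
  then obtain W where W: "finite {i \<in> UNIV. W i \<noteq> topspace (discrete_topology (cosets_of (Gs i)))}"
    "y \<in> Pi\<^sub>E UNIV W" "Pi\<^sub>E UNIV W \<subseteq> T"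
    using assms(3) unfolding openin_product_topology_alt by blast
  define F where "F = {i \<in> UNIV. W i \<noteq> topspace (discrete_topology (cosets_of (Gs i)))}"
  define n where "n = Max (insert 0 F)"
  have Fn: "i \<in> F \<Longrightarrow> i \<le> n" for i using W(1) unfolding n_def F_def by auto
  have yU: "y \<in> odometer_space Gs" using assms(3) T by auto
  show ?thesis
  proof (intro exI ballI impI)
    fix y' assume y': "y' \<in> odometer_space Gs" "y' n = y n"
    have "y' i \<in> W i" for i
    proof (cases "i \<in> F")
      case True
      hence "y' i = y i" using coord_eq[OF assms(1) yU y'(1) y'(2)] Fn by blast
      thus ?thesis using W(2) by (auto simp: PiE_UNIV_domain)
    next
      case False
      hence "W i = cosets_of (Gs i)" unfolding F_def by auto
      thus ?thesis using y'(1) unfolding odometer_space_def by auto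
    qed
    hence "y' \<in> T" using W(3) by (auto simp: PiE_UNIV_domain)
    thus "y' \<in> U" using T y' by auto
  qed
qed

lemma cyl_open:
  shows "openin (odometer_top Gs) {y' \<in> odometer_space Gs. y' n = c}"
proof -
  let ?A = "\<lambda>n. cosets_of (Gs n)"
  have "openin (product_topology (\<lambda>n. discrete_topology (?A n)) UNIV)
           {x \<in> (\<Pi>\<^sub>E n\<in>UNIV. ?A n). x n = c}"
    by (rule open_dep) (auto intro!: exI[where x=n])
  hence "openin (odometer_top Gs) (odometer_space Gs \<inter> {x \<in> (\<Pi>\<^sub>E n\<in>UNIV. ?A n). x n = c})"
    unfolding odometer_top_def by (rule openin_subtopology_Int2)
  moreover have "odometer_space Gs \<inter> {x \<in> (\<Pi>\<^sub>E n\<in>UNIV. ?A n). x n = c}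
      = {y' \<in> odometer_space Gs. y' n = c}"
    unfolding odometer_space_def PiE_UNIV_domain by auto
  ultimately show ?thesis by simp
qed

lemma odo_compact:
  assumes "odometer_seq Gs"
  shows "compact_space (odometer_top Gs)"
proof -
  let ?A = "\<lambda>n. cosets_of (Gs n)"
  let ?P = "product_topology (\<lambda>n. discrete_topology (?A n)) UNIV"
  have "compact_space ?P"
    unfolding compact_space_product_topology compact_space_discrete_topology
    using assms unfolding odometer_seq_def finite_index_def by blast
  moreover have "closedin ?P (odometer_space Gs)"
    unfolding closedin_def
  proof
    show "odometer_space Gs \<subseteq> topspace ?P"
      unfolding odometer_space_def by (auto simp: PiE_UNIV_domain)
    show "openin ?P (topspace ?P - odometer_space Gs)"
      unfolding topspace_product_topology topspace_discrete_topology
    proof (rule open_dep)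
      show "\<forall>x\<in>(\<Pi>\<^sub>E n\<in>UNIV. ?A n) - odometer_space Gs. \<exists>m. \<forall>x'\<in>(\<Pi>\<^sub>E n\<in>UNIV. ?A n).
           (\<forall>i\<le>m. x' i = x i) \<longrightarrow> x' \<in> (\<Pi>\<^sub>E n\<in>UNIV. ?A n) - odometer_space Gs"
      proof
        fix x assume x: "x \<in> (\<Pi>\<^sub>E n\<in>UNIV. ?A n) - odometer_space Gs"
        then obtain k where k: "\<not> x (Suc k) \<subseteq> x k"
          unfolding odometer_space_def PiE_UNIV_domain by auto
        show "\<exists>m. \<forall>x'\<in>(\<Pi>\<^sub>E n\<in>UNIV. ?A n).
           (\<forall>i\<le>m. x' i = x i) \<longrightarrow> x' \<in> (\<Pi>\<^sub>E n\<in>UNIV. ?A n) - odometer_space Gs"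
        proof (intro exI[where x="Suc k"] ballI impI)
          fix x' assume "x' \<in> (\<Pi>\<^sub>E n\<in>UNIV. ?A n)" "\<forall>i\<le>Suc k. x' i = x i"
          note xx = this
          have "x' k = x k" "x' (Suc k) = x (Suc k)" using xx(2) by auto
          hence "\<not> x' (Suc k) \<subseteq> x' k" using k by simp
          thus "x' \<in> (\<Pi>\<^sub>E n\<in>UNIV. ?A n) - odometer_space Gs"
            using xx(1) unfolding odometer_space_def by blast
        qed
      qed
    qed auto
  qed
  ultimately have "compactin ?P (odometer_space Gs)" by (rule closedin_compact_space)
  thus ?thesis unfolding odometer_top_def by (rule compact_space_subtopology)
qed

lemma uniform_const:
  assumes "odometer_seq Gs"
    "\<forall>y\<in>odometer_space Gs. \<exists>n. \<forall>y'\<in>odometer_space Gs. y' n = y n \<longrightarrow> F y' = F y"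
  shows "\<exists>N. \<forall>y1\<in>odometer_space Gs. \<forall>y2\<in>odometer_space Gs. y1 N = y2 N \<longrightarrow> F y1 = F y2"
proof -
  let ?Y = "odometer_space Gs"
  obtain nf where nf: "\<forall>y\<in>?Y. \<forall>y'\<in>?Y. y' (nf y) = y (nf y) \<longrightarrow> F y' = F y"
    using bchoice[OF assms(2)] by blast
  define cyl where "cyl y = {y' \<in> ?Y. y' (nf y) = y (nf y)}" for y
  have "\<forall>U\<in>cyl ` ?Y. openin (odometer_top Gs) U" unfolding cyl_def using cyl_open by blast
  moreover have "topspace (odometer_top Gs) \<subseteq> \<Union> (cyl ` ?Y)"
    unfolding topspace_odo cyl_def by blast
  ultimately obtain FF where FF: "finite FF" "FF \<subseteq> cyl ` ?Y" "topspace (odometer_top Gs) \<subseteq> \<Union>FF"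
    using odo_compact[OF assms(1)] unfolding compact_space_alt by meson
  then obtain C where C: "C \<subseteq> ?Y" "finite C" "FF = cyl ` C"
    using finite_subset_image[OF FF(1,2)] by blast
  define N where "N = Max (insert 0 (nf ` C))"
  have CN: "z \<in> C \<Longrightarrow> nf z \<le> N" for z using C unfolding N_def by auto
  show ?thesis
  proof (intro exI[where x=N] ballI impI)
    fix y1 y2 assume y: "y1 \<in> ?Y" "y2 \<in> ?Y" "y1 N = y2 N"
    then obtain z where z: "z \<in> C" "y1 \<in> cyl z" using FF C unfolding topspace_odo by blast
    have zY: "z \<in> ?Y" using z C by blast
    have y1z: "y1 (nf z) = z (nf z)" using z(2) unfolding cyl_def by blast
    have "y2 (nf z) = y1 (nf z)" using coord_eq[OF assms(1) y(1) y(2) y(3)[symmetric] CN[OF z(1)]] .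
    hence e2: "y2 (nf z) = z (nf z)" using y1z by simp
    have "F y2 = F z" by (rule nf[rule_format, OF zY y(2) e2])
    moreover have "F y1 = F z" by (rule nf[rule_format, OF zY y(1) y1z])
    ultimately
    show "F y1 = F y2" by simp
  qed
qed

lemma gen_all:
  fixes S :: "(int ^ 'd) set"
  assumes S0: "0 \<in> S" and Sadd: "\<forall>a\<in>S. \<forall>b\<in>S. a + b \<in> S" and Sneg: "\<forall>a\<in>S. - a \<in> S"
    and Sgen: "\<forall>j. (\<chi> i. if i = j then 1 else 0) \<in> S"
  shows "x \<in> S"
proof -
  have mult: "(\<chi> i. if i = j then k else 0) \<in> S" for j and k :: int
  proof (induction k rule: int_induct[where k=0])
    case base
    have "(\<chi> i. if i = j then 0::int else 0) = 0" by (simp add: vec_eq_iff)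
    thus ?case using S0 by simp
  next
    case (step1 i)
    have "(\<chi> l. if l = j then i + 1 else 0) = (\<chi> l. if l = j then i else 0) + (\<chi> l. if l = j then 1 else (0::int))"
      by (simp add: vec_eq_iff)
    thus ?case using Sadd step1.IH Sgen by metis
  next
    case (step2 i)
    have "(\<chi> l. if l = j then i - 1 else 0) = (\<chi> l. if l = j then i else 0) + - (\<chi> l. if l = j then 1 else (0::int))"
      by (simp add: vec_eq_iff)
    thus ?case using Sadd Sneg step2.IH Sgen by metis
  qed
  have sumS: "finite F \<Longrightarrow> (\<Sum>j\<in>F. (\<chi> i. if i = j then x $ j else 0)) \<in> S" for F
  proof (induction F rule: finite_induct)
    case empty thus ?case using S0 by simp
  next
    case (insert a F) thus ?case using Sadd mult by simp
  qed
  have "x = (\<Sum>j\<in>UNIV. (\<chi> i. if i = j then x $ j else 0))"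
    by (simp add: vec_eq_iff)
  thus ?thesis using sumS[of UNIV] by simp
qed

theorem theorem3p4:
  fixes Gs Hs :: "nat \<Rightarrow> (int ^ 'd) set"
    and \<phi> :: "(nat \<Rightarrow> (int ^ 'd) set) \<Rightarrow> (nat \<Rightarrow> (int ^ 'd) set)"
    and f :: "int ^ 'd \<Rightarrow> (nat \<Rightarrow> (int ^ 'd) set) \<Rightarrow> int ^ 'd"
  assumes freeX: "free_odometer Gs"
    and freeY: "free_odometer Hs"
    and coe: "cont_orbit_equiv Hs Gs \<phi>"
    and cocycle: "\<forall>h. \<forall>y\<in>odometer_space Hs. odo_act (f h y) (\<phi> y) = \<phi> (odo_act h y)"
  shows "\<exists>G0 H0 (q::nat) C \<theta>.
     finite_index G0 \<and> finite_index H0 \<and> index G0 = index H0 \<and>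
     (\<forall>i<q. clopenin (odometer_top Hs) (C i) \<and> C i \<noteq> {}) \<and>
     (\<forall>i<q. \<forall>j<q. i \<noteq> j \<longrightarrow> C i \<inter> C j = {}) \<and>
     (\<Union>i<q. C i) = odometer_space Hs \<and>
     (\<forall>i<q. \<forall>h\<in>H0. \<forall>y\<in>C i. odo_act h y \<in> C i) \<and>
     (\<forall>i<q. bij_betw (\<theta> i) H0 G0 \<and> (\<forall>a\<in>H0. \<forall>b\<in>H0. \<theta> i (a + b) = \<theta> i a + \<theta> i b)) \<and>
     (\<forall>i<q. \<forall>h\<in>H0. \<forall>y\<in>C i. f h y = \<theta> i h)"
proof -
  define Y where "Y = odometer_space Hs"
  define X where "X = odometer_space Gs"
  have seqY: "odometer_seq Hs" using freeY unfolding free_odometer_def by blast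
  have seqX: "odometer_seq Gs" using freeX unfolding free_odometer_def by blast
  have hom: "homeomorphic_map (odometer_top Hs) (odometer_top Gs) \<phi>"
    and orb: "\<forall>y\<in>Y. \<phi> ` {odo_act h y | h. True} = {odo_act g (\<phi> y) | g. True}"
    and loc: "\<forall>h. \<forall>y\<in>Y. \<exists>U g. clopenin (odometer_top Hs) U \<and> y \<in> U \<and>
         (\<forall>y'\<in>U. \<phi> (odo_act h y') = odo_act g (\<phi> y'))"
    using coe unfolding cont_orbit_equiv_def Y_def by blast+
  have phiX: "\<phi> ` Y = X" using homeomorphic_imp_surjective_map[OF hom]
    unfolding topspace_odo X_def Y_def .
  have phiinj: "inj_on \<phi> Y" using homeomorphic_imp_injective_map[OF hom]
    unfolding topspace_odo Y_def .
  have phiXe: "y \<in> Y \<Longrightarrow> \<phi> y \<in> X" for y using phiX by blast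
  have actY: "y \<in> Y \<Longrightarrow> odo_act h y \<in> Y" for h y using act_space unfolding Y_def by blast
  have coc: "y \<in> Y \<Longrightarrow> odo_act (f h y) (\<phi> y) = \<phi> (odo_act h y)" for h y
    using cocycle unfolding Y_def by blast
  have canX: "x \<in> X \<Longrightarrow> odo_act g x = odo_act g' x \<Longrightarrow> g = g'" for x g g'
    using free_cancel[OF freeX] unfolding X_def by blast
  have canY: "y \<in> Y \<Longrightarrow> odo_act g y = odo_act g' y \<Longrightarrow> g = g'" for y g g'
    using free_cancel[OF freeY] unfolding Y_def by blast
  have f_add: "f (a + b) y = f a (odo_act b y) + f b y" if y: "y \<in> Y" for a b y
  proof -
    have "odo_act (f (a + b) y) (\<phi> y) = \<phi> (odo_act a (odo_act b y))"
      using coc[OF y] by (simp add: act_act)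
    also have "\<dots> = odo_act (f a (odo_act b y)) (\<phi> (odo_act b y))"
      using coc[OF actY[OF y]] by simp
    also have "\<dots> = odo_act (f a (odo_act b y) + f b y) (\<phi> y)"
      using coc[OF y, of b] act_act[of "f a (odo_act b y)" "f b y" "\<phi> y"] by simp
    finally show ?thesis using canX[OF phiXe[OF y]] by blast
  qed
  have f_0: "f 0 y = 0" if y: "y \<in> Y" for y
  proof -
    have "odo_act (f 0 y) (\<phi> y) = odo_act 0 (\<phi> y)" using coc[OF y, of 0] by (simp add: act_0)
    thus ?thesis using canX[OF phiXe[OF y]] by blast
  qed
  have f_loc: "\<exists>n. \<forall>y'\<in>Y. y' n = y n \<longrightarrow> f h y' = f h y" if y: "y \<in> Y" for h y
  proof -
    obtain U g where U: "clopenin (odometer_top Hs) U" "y \<in> U"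
      "\<forall>y'\<in>U. \<phi> (odo_act h y') = odo_act g (\<phi> y')" using loc y by blast
    have Uo: "openin (odometer_top Hs) U" using U(1) unfolding clopenin_def by blast
    have UY: "U \<subseteq> Y" using openin_subset[OF Uo] unfolding topspace_odo Y_def .
    have fU: "f h y' = g" if "y' \<in> U" for y'
    proof -
      have y'Y: "y' \<in> Y" using UY that by blast
      have "odo_act (f h y') (\<phi> y') = odo_act g (\<phi> y')" using coc[OF y'Y, of h] that U(3) by simp
      thus ?thesis using canX[OF phiXe[OF y'Y]] by blast
    qed
    obtain n where n: "\<forall>y'\<in>Y. y' n = y n \<longrightarrow> y' \<in> U"
      using open_cyl[OF seqY Uo U(2)] unfolding Y_def by blast
    have "\<forall>y'\<in>Y. y' n = y n \<longrightarrow> f h y' = f h y"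
    proof (intro ballI impI)
      fix y' assume "y' \<in> Y" "y' n = y n"
      hence "y' \<in> U" using n by blast
      thus "f h y' = f h y" using fU U(2) by simp
    qed
    thus ?thesis by blast
  qed
  define e where "e j = (\<chi> i. if i = j then 1 else (0::int))" for j :: 'd
  have "\<forall>j. \<exists>N. \<forall>y1\<in>Y. \<forall>y2\<in>Y. y1 N = y2 N \<longrightarrow> f (e j) y1 = f (e j) y2"
  proof
    fix j show "\<exists>N. \<forall>y1\<in>Y. \<forall>y2\<in>Y. y1 N = y2 N \<longrightarrow> f (e j) y1 = f (e j) y2"
      using uniform_const[OF seqY, of "f (e j)"] f_loc unfolding Y_def by blast
  qed
  then obtain Nf where Nf: "\<And>j. \<forall>y1\<in>Y. \<forall>y2\<in>Y. y1 (Nf j) = y2 (Nf j) \<longrightarrow> f (e j) y1 = f (e j) y2"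
    by metis
  define N where "N = Max (range Nf)"
  have NfN: "Nf j \<le> N" for j unfolding N_def by simp
  have genN: "f (e j) y1 = f (e j) y2" if "y1 \<in> Y" "y2 \<in> Y" "y1 N = y2 N" for j y1 y2
  proof -
    have "y1 (Nf j) = y2 (Nf j)"
      using coord_eq[OF seqY, of y2 y1 N "Nf j"] that NfN unfolding Y_def by metis
    thus ?thesis using Nf that by blast
  qed
  define H0 where "H0 = Hs N"
  have fiH0: "finite_index H0" using seqY unfolding odometer_seq_def H0_def by blast
  hence sgH0: "subgroup_add H0" unfolding finite_index_def by blast
  have actN: "odo_act h z N = z N" if hz: "h \<in> H0" "z \<in> Y" for h z
  proof -
    obtain c where "z N = (+) c ` Hs N" using hz(2) unfolding Y_def odometer_space_def cosets_of_def by blast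
    thus ?thesis using subgroup_translate[OF sgH0 hz(1)] unfolding odo_act_def H0_def by simp
  qed
  have comm: "odo_act b (odo_act h z) = odo_act h (odo_act b z)" for b h z
    by (simp add: act_act add.commute)
  define Inv where "Inv = {a. \<forall>z\<in>Y. \<forall>h\<in>H0. f a (odo_act h z) = f a z}"
  have allInv: "a \<in> Inv" for a
  proof (rule gen_all)
    show "0 \<in> Inv" unfolding Inv_def using f_0 actY by simp
    show "\<forall>a\<in>Inv. \<forall>b\<in>Inv. a + b \<in> Inv"
    proof (intro ballI)
      fix a b assume ab: "a \<in> Inv" "b \<in> Inv"
      show "a + b \<in> Inv" unfolding Inv_def
      proof (intro CollectI ballI)
        fix z h assume z: "z \<in> Y" and h: "h \<in> H0"
        have "f (a + b) (odo_act h z) = f a (odo_act b (odo_act h z)) + f b (odo_act h z)"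
          using f_add actY z by blast
        also have "\<dots> = f a (odo_act h (odo_act b z)) + f b z"
          using ab z h unfolding Inv_def comm by simp
        also have "\<dots> = f a (odo_act b z) + f b z"
          using ab actY[OF z] h unfolding Inv_def by simp
        also have "\<dots> = f (a + b) z" using f_add z by simp
        finally show "f (a + b) (odo_act h z) = f (a + b) z" .
      qed
    qed
    show "\<forall>a\<in>Inv. - a \<in> Inv"
    proof
      fix a assume a: "a \<in> Inv"
      have neg: "f (- a) z = - f a (odo_act (- a) z)" if "z \<in> Y" for z
      proof -
        have "f (a + - a) z = f a (odo_act (- a) z) + f (- a) z" using f_add that by blast
        thus ?thesis using f_0[OF that] by (simp add: eq_neg_iff_add_eq_0 add.commute)
      qed
      show "- a \<in> Inv" unfolding Inv_def
      proof (intro CollectI ballI)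
        fix z h assume z: "z \<in> Y" and h: "h \<in> H0"
        have "f (- a) (odo_act h z) = - f a (odo_act (- a) (odo_act h z))"
          using neg actY z by blast
        also have "\<dots> = - f a (odo_act (- a) z)"
          using a actY[OF z] h unfolding Inv_def comm by simp
        also have "\<dots> = f (- a) z" using neg z by simp
        finally show "f (- a) (odo_act h z) = f (- a) z" .
      qed
    qed
    show "\<forall>j. (\<chi> i. if i = j then 1 else 0) \<in> Inv"
    proof
      fix j
      have "e j \<in> Inv" unfolding Inv_def
      proof (intro CollectI ballI)
        fix z h assume z: "z \<in> Y" and h: "h \<in> H0"
        show "f (e j) (odo_act h z) = f (e j) z" by (rule genN[OF actY[OF z] z actN[OF h z]])
      qed
      thus "(\<chi> i. if i = j then 1 else 0) \<in> Inv" by (simp add: e_def)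
    qed
  qed
  have symm: "f h (odo_act a z) = f h z" if "h \<in> H0" "z \<in> Y" for h a z
  proof -
    have "f (h + a) z = f h (odo_act a z) + f a z" using f_add that(2) by blast
    moreover have "f (a + h) z = f a (odo_act h z) + f h z" using f_add that(2) by blast
    moreover have "f a (odo_act h z) = f a z" using allInv[of a] that unfolding Inv_def by blast
    ultimately show ?thesis by (simp add: add.commute)
  qed
  define y0 where "y0 = (\<lambda>n. Hs n)"
  have y0Y: "y0 \<in> Y"
  proof -
    have "Hs n \<in> cosets_of (Hs n)" for n unfolding cosets_of_def
      by (rule CollectI, rule exI[where x=0], simp)
    thus ?thesis using seqY unfolding Y_def odometer_space_def y0_def odometer_seq_def by blast
  qed
  have const: "f h z = f h y0" if h: "h \<in> H0" and z: "z \<in> Y" for h z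
  proof -
    obtain n where n: "\<forall>y'\<in>Y. y' n = z n \<longrightarrow> f h y' = f h z" using f_loc[OF z] by blast
    obtain c where c: "z n = (+) c ` Hs n" using z unfolding Y_def odometer_space_def cosets_of_def by blast
    have "odo_act c y0 n = z n" unfolding odo_act_def y0_def c ..
    hence "f h (odo_act c y0) = f h z" using n actY[OF y0Y] by blast
    moreover have "f h (odo_act c y0) = f h y0" using symm h y0Y by blast
    ultimately show ?thesis by simp
  qed
  define F where "F a = f a y0" for a
  define G0 where "G0 = F ` H0"
  have Finj: "inj F"
  proof (rule injI)
    fix a b assume "F a = F b"
    hence "\<phi> (odo_act a y0) = \<phi> (odo_act b y0)" using coc[OF y0Y] unfolding F_def by metis
    hence "odo_act a y0 = odo_act b y0" using phiinj actY[OF y0Y] by (meson inj_onD)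
    thus "a = b" using canY[OF y0Y] by blast
  qed
  have Fsurj: "\<exists>a. F a = g" for g
  proof -
    have "odo_act g (\<phi> y0) \<in> \<phi> ` {odo_act h y0 | h. True}" using orb y0Y by blast
    then obtain a where "odo_act g (\<phi> y0) = \<phi> (odo_act a y0)" by blast
    hence "odo_act g (\<phi> y0) = odo_act (F a) (\<phi> y0)" using coc[OF y0Y] unfolding F_def by simp
    hence "F a = g" using canX[OF phiXe[OF y0Y]] by metis
    thus ?thesis by blast
  qed
  have Fadd: "F (a + b) = F a + F b" if "a \<in> H0" "b \<in> H0" for a b
    unfolding F_def using f_add[OF y0Y] const[OF that(1) actY[OF y0Y]] by simp
  have sgG0: "subgroup_add G0" unfolding subgroup_add_def
  proof (intro conjI ballI)
    have "0 \<in> H0" using sgH0 unfolding subgroup_add_def by blast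
    moreover have "F 0 = 0" unfolding F_def using f_0 y0Y by simp
    ultimately show "0 \<in> G0" unfolding G0_def by force
  next
    fix a b assume "a \<in> G0" "b \<in> G0"
    then obtain a' b' where "a' \<in> H0" "b' \<in> H0" "a = F a'" "b = F b'" unfolding G0_def by blast
    moreover have "a' + b' \<in> H0" using calculation sgH0 unfolding subgroup_add_def by blast
    ultimately show "a + b \<in> G0" unfolding G0_def using Fadd by force
  next
    fix a assume "a \<in> G0"
    then obtain a' where a': "a' \<in> H0" "a = F a'" unfolding G0_def by blast
    have na: "- a' \<in> H0" using a' sgH0 unfolding subgroup_add_def by blast
    have "F (a' + - a') = F a' + F (- a')" using Fadd a' na by blast
    moreover have "F 0 = 0" unfolding F_def using f_0 y0Y by simp
    ultimately have "F (- a') = - a" using a' by (simp add: eq_neg_iff_add_eq_0 add.commute)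
    thus "- a \<in> G0" using na unfolding G0_def by force
  qed
  have cosimg: "F ` ((+) a ` H0) = (+) (F a) ` G0" for a
  proof -
    have "F (a + h) = F a + F h" if "h \<in> H0" for h
    proof -
      have "F (h + a) = f h (odo_act a y0) + F a" unfolding F_def using f_add[OF y0Y] by simp
      thus ?thesis using const[OF that actY[OF y0Y]] unfolding F_def by (simp add: add.commute)
    qed
    hence "F ` ((+) a ` H0) = (\<lambda>h. F a + F h) ` H0" by (simp add: image_image)
    thus ?thesis unfolding G0_def by (simp add: image_image)
  qed
  have bij: "bij_betw ((`) F) (cosets_of H0) (cosets_of G0)"
    unfolding bij_betw_def
  proof
    show "inj_on ((`) F) (cosets_of H0)" using Finj by (simp add: inj_on_def inj_image_eq_iff)
    show "(`) F ` cosets_of H0 = cosets_of G0"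
    proof
      show "(`) F ` cosets_of H0 \<subseteq> cosets_of G0"
      proof
        fix B assume "B \<in> (`) F ` cosets_of H0"
        then obtain a where "B = F ` ((+) a ` H0)" unfolding cosets_of_def by blast
        hence "B = (+) (F a) ` G0" using cosimg by simp
        thus "B \<in> cosets_of G0" unfolding cosets_of_def by blast
      qed
      show "cosets_of G0 \<subseteq> (`) F ` cosets_of H0"
      proof
        fix A assume "A \<in> cosets_of G0"
        then obtain g where g: "A = (+) g ` G0" unfolding cosets_of_def by blast
        obtain a where a: "F a = g" using Fsurj by blast
        have "(+) a ` H0 \<in> cosets_of H0" unfolding cosets_of_def by blast
        moreover have "A = F ` ((+) a ` H0)" using cosimg[of a] a g by simp
        ultimately show "A \<in> (`) F ` cosets_of H0" by (rule rev_image_eqI)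
      qed
    qed
  qed
  have finH0: "finite (cosets_of H0)" using fiH0 unfolding finite_index_def by blast
  have fiG0: "finite_index G0" unfolding finite_index_def
    using sgG0 bij_betw_finite[OF bij] finH0 by blast
  have idx: "index G0 = index H0" unfolding index_def using bij_betw_same_card[OF bij] by simp
  have clo: "clopenin (odometer_top Hs) Y"
    unfolding clopenin_def Y_def
    using openin_topspace[of "odometer_top Hs"] closedin_topspace[of "odometer_top Hs"]
    unfolding topspace_odo by blast
  have Yne: "Y \<noteq> {}" using y0Y by blast
  have bijF: "bij_betw F H0 G0" unfolding bij_betw_def G0_def using inj_on_subset[OF Finj] by blast
  have P1: "\<forall>i<(1::nat). clopenin (odometer_top Hs) Y \<and> Y \<noteq> {}" using clo Yne by blast
  have P2: "\<forall>i<(1::nat). \<forall>j<(1::nat). i \<noteq> j \<longrightarrow> Y \<inter> Y = {}" by simp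
  have P3: "(\<Union>i<(1::nat). Y) = odometer_space Hs" unfolding Y_def by (simp add: lessThan_Suc)
  have P4: "\<forall>i<(1::nat). \<forall>h\<in>H0. \<forall>y\<in>Y. odo_act h y \<in> Y" using actY by blast
  have P5: "\<forall>i<(1::nat). bij_betw F H0 G0 \<and> (\<forall>a\<in>H0. \<forall>b\<in>H0. F (a + b) = F a + F b)"
    using bijF Fadd by blast
  have P6: "\<forall>i<(1::nat). \<forall>h\<in>H0. \<forall>y\<in>Y. f h y = F h" using const unfolding F_def by blast
  show ?thesis
    apply (rule exI[where x=G0], rule exI[where x=H0], rule exI[where x=1],
        rule exI[where x="\<lambda>i. Y"], rule exI[where x="\<lambda>i. F"])
    using fiG0 fiH0 idx P1 P2 P3 P4 P5 P6 by blast
qed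

end
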